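(* Let $q$ be a prime power and let $M$ be a simple matroid representable over $GF(q)$ that has no coloops and has two distinct loose elements $e$ and $f$. Then $r(M)\le 2q$, or $\{e,f\}$ is a cocircuit of $M$.
   Context: All matroids are finite. An element $t$ of a matroid $M$ is loose if every circuit of $M$ containing $t$ has size at least the rank $r(M)$. *)

theory Defs
  imports "HOL-Analysis.Analysis" "HOL-Computational_Algebra.Primes"
begin

definition matroid :: "'a set \<Rightarrow> ('a set \<Rightarrow> bool) \<Rightarrow> bool" where
  "matroid E indep \<longleftrightarrow> finite E \<and> indep {} \<and>
     (\<forall>X. indep X \<longrightarrow> X \<subseteq> E) \<and>
     (\<forall>X Y. indep X \<longrightarrow> Y \<subseteq> X \<longrightarrow> indep Y) \<and>
     (\<forall>X Y. indep X \<longrightarrow> indep Y \<longrightarrow> card X < card Y \<longrightarrow>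
        (\<exists>y \<in> Y - X. indep (insert y X)))"

definition mrank :: "'a set \<Rightarrow> ('a set \<Rightarrow> bool) \<Rightarrow> nat" where
  "mrank E indep = Max {card X | X. X \<subseteq> E \<and> indep X}"

definition circuit :: "'a set \<Rightarrow> ('a set \<Rightarrow> bool) \<Rightarrow> 'a set \<Rightarrow> bool" where
  "circuit E indep C \<longleftrightarrow> C \<subseteq> E \<and> \<not> indep C \<and> (\<forall>D. D \<subset> C \<longrightarrow> indep D)"

definition basis :: "'a set \<Rightarrow> ('a set \<Rightarrow> bool) \<Rightarrow> 'a set \<Rightarrow> bool" where
  "basis E indep B \<longleftrightarrow> B \<subseteq> E \<and> indep B \<and> (\<forall>Y. B \<subset> Y \<longrightarrow> Y \<subseteq> E \<longrightarrow> \<not> indep Y)"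

definition cocircuit :: "'a set \<Rightarrow> ('a set \<Rightarrow> bool) \<Rightarrow> 'a set \<Rightarrow> bool" where
  "cocircuit E indep C \<longleftrightarrow> C \<subseteq> E \<and> (\<forall>B. basis E indep B \<longrightarrow> C \<inter> B \<noteq> {}) \<and>
     (\<forall>D. D \<subset> C \<longrightarrow> (\<exists>B. basis E indep B \<and> D \<inter> B = {}))"

definition coloop :: "'a set \<Rightarrow> ('a set \<Rightarrow> bool) \<Rightarrow> 'a \<Rightarrow> bool" where
  "coloop E indep e \<longleftrightarrow> e \<in> E \<and> (\<forall>B. basis E indep B \<longrightarrow> e \<in> B)"

text \<open>Simple: no loops and no parallel pairs, i.e. no circuits of size 1 or 2.\<close>
definition simple_matroid :: "'a set \<Rightarrow> ('a set \<Rightarrow> bool) \<Rightarrow> bool" where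
  "simple_matroid E indep \<longleftrightarrow> (\<forall>C. circuit E indep C \<longrightarrow> card C \<ge> 3)"

definition loose :: "'a set \<Rightarrow> ('a set \<Rightarrow> bool) \<Rightarrow> 'a \<Rightarrow> bool" where
  "loose E indep t \<longleftrightarrow> t \<in> E \<and>
     (\<forall>C. circuit E indep C \<longrightarrow> t \<in> C \<longrightarrow> card C \<ge> mrank E indep)"

definition represents :: "'a set \<Rightarrow> ('a set \<Rightarrow> bool) \<Rightarrow> ('a \<Rightarrow> 'f::field ^ 'n) \<Rightarrow> bool" where
  "represents E indep phi \<longleftrightarrow>
     (\<forall>X. X \<subseteq> E \<longrightarrow> (indep X \<longleftrightarrow> inj_on phi X \<and> \<not> vec.dependent (phi ` X)))"

end

theory Submission
  imports Defs
begin

lemma m_fin: "matroid E indep \<Longrightarrow> finite E"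
  unfolding matroid_def by (elim conjE)

lemma m_down:
  assumes "matroid E indep" "indep X" "Y \<subseteq> X" shows "indep Y"
proof -
  have "\<forall>X Y. indep X \<longrightarrow> Y \<subseteq> X \<longrightarrow> indep Y" using assms(1) unfolding matroid_def by (elim conjE)
  thus ?thesis using assms(2,3) by blast
qed

lemma min_dep:
  assumes "finite X" "\<not> indep X"
  shows "\<exists>C\<subseteq>X. \<not> indep C \<and> (\<forall>D. D \<subset> C \<longrightarrow> indep D)"
  using assms
proof (induction "card X" arbitrary: X rule: less_induct)
  case less
  show ?case
  proof (cases "\<forall>D. D \<subset> X \<longrightarrow> indep D")
    case True then show ?thesis using less.prems by blast
  next
    case False
    then obtain D where D: "D \<subset> X" "\<not> indep D" by blast
    have "card D < card X" using D less.prems psubset_card_mono by blast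
    moreover have "finite D" using D less.prems finite_subset by blast
    ultimately obtain C where "C \<subseteq> D" "\<not> indep C" "\<forall>D'. D' \<subset> C \<longrightarrow> indep D'"
      using less.hyps D by blast
    then show ?thesis using D by blast
  qed
qed

lemma basis_card:
  assumes M: "matroid E indep" and B: "basis E indep B"
  shows "card B = mrank E indep"
proof -
  have fin: "finite E" using M by (rule m_fin)
  have le: "card X \<le> card B" if XX: "X \<subseteq> E" "indep X" for X
  proof (rule ccontr)
    assume "\<not> card X \<le> card B"
    hence "card B < card X" by simp
    moreover have "indep B" using B unfolding basis_def by blast
    moreover have aug: "\<forall>X Y. indep X \<longrightarrow> indep Y \<longrightarrow> card X < card Y \<longrightarrow>
        (\<exists>y \<in> Y - X. indep (insert y X))" using M unfolding matroid_def by (elim conjE)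
    ultimately obtain y where y: "y \<in> X - B" "indep (insert y B)"
      using XX(2) by blast
    have "B \<subset> insert y B" using y by blast
    moreover have "insert y B \<subseteq> E" using y XX B unfolding basis_def by blast
    ultimately show False using B y unfolding basis_def by blast
  qed
  have finS: "finite {card X | X. X \<subseteq> E \<and> indep X}"
  proof -
    have "{card X | X. X \<subseteq> E \<and> indep X} \<subseteq> card ` Pow E" by blast
    thus ?thesis using fin finite_subset by blast
  qed
  have memB: "card B \<in> {card X | X. X \<subseteq> E \<and> indep X}"
    using B unfolding basis_def by blast
  have "Max {card X | X. X \<subseteq> E \<and> indep X} = card B"
  proof (rule Max_eqI[OF finS _ memB])
    fix y assume "y \<in> {card X | X. X \<subseteq> E \<and> indep X}"
    then obtain X where "y = card X" "X \<subseteq> E" "indep X" by blast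
    thus "y \<le> card B" using le by simp
  qed
  thus ?thesis unfolding mrank_def by simp
qed

lemma dep_card:
  assumes M: "matroid E indep" and L: "loose E indep e"
    and X: "X \<subseteq> E" "e \<in> X" "indep (X - {e})" "\<not> indep X"
  shows "mrank E indep \<le> card X"
proof -
  have fin: "finite X" using m_fin[OF M] X(1) by (rule finite_subset[rotated])
  obtain C where C: "C \<subseteq> X" "\<not> indep C" "\<forall>D. D \<subset> C \<longrightarrow> indep D"
    using min_dep[of X indep, OF fin X(4)] by blast
  have "e \<in> C"
  proof (rule ccontr)
    assume "e \<notin> C"
    hence "C \<subseteq> X - {e}" using C by blast
    thus False using C(2) m_down[OF M X(3)] by blast
  qed
  moreover have "circuit E indep C" using C X unfolding circuit_def by blast
  ultimately have "mrank E indep \<le> card C" using L unfolding loose_def by blast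
  also have "\<dots> \<le> card X" using C fin card_mono by blast
  finally show ?thesis .
qed

lemma span_card:
  fixes phi :: "'a \<Rightarrow> 'f::field ^ 'n"
  assumes M: "matroid E indep" and R: "represents E indep phi" and L: "loose E indep e"
    and S: "S \<subseteq> E" "e \<notin> S" "phi e \<in> vec.span (phi ` S)"
  shows "mrank E indep \<le> card S + 1"
proof -
  have fin: "finite S" using m_fin[OF M] S(1) by (rule finite_subset[rotated])
  have eE: "e \<in> E" using L unfolding loose_def by blast
  obtain B' where B': "B' \<subseteq> phi ` S" "vec.independent B'" "phi ` S \<subseteq> vec.span B'"
    using vec.maximal_independent_subset by blast
  define S0 where "S0 = inv_into S phi ` B'"
  have S0S: "S0 \<subseteq> S" unfolding S0_def using B' by (auto intro: inv_into_into)
  have imS0: "phi ` S0 = B'" unfolding S0_def using B'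
    by (force simp: image_image f_inv_into_f)
  have inj: "inj_on phi S0" unfolding S0_def inj_on_def
  proof (intro ballI impI)
    fix u v assume uv: "u \<in> inv_into S phi ` B'" "v \<in> inv_into S phi ` B'" "phi u = phi v"
    then obtain x y where xy: "x \<in> B'" "y \<in> B'" "u = inv_into S phi x" "v = inv_into S phi y"
      by blast
    have "phi u = x" using xy(1,3) B'(1) f_inv_into_f by (metis subsetD)
    moreover have "phi v = y" using xy(2,4) B'(1) f_inv_into_f by (metis subsetD)
    ultimately show "u = v" using uv(3) xy by simp
  qed
  have sp: "vec.span (phi ` S) \<subseteq> vec.span B'"
    using B' by (intro vec.span_minimal) (auto simp: vec.subspace_span)
  have ind0: "indep S0" using R S S0S inj imS0 B' unfolding represents_def by auto
  have e0: "e \<notin> S0" using S S0S by blast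
  have "\<not> indep (insert e S0)"
  proof
    assume a: "indep (insert e S0)"
    have "insert e S0 \<subseteq> E" using eE S0S S by blast
    hence i1: "inj_on phi (insert e S0)" and i2: "\<not> vec.dependent (phi ` insert e S0)"
      using a R unfolding represents_def by auto
    have "phi e \<notin> B'" using i1 e0 imS0 by auto
    hence "phi e \<notin> vec.span B'" using i2 imS0 by (simp add: vec.independent_insert)
    thus False using S sp by blast
  qed
  hence "mrank E indep \<le> card (insert e S0)"
    using dep_card[OF M L, of "insert e S0"] eE S0S S ind0 e0 by auto
  also have "\<dots> = card S0 + 1" using e0 finite_subset[OF S0S fin] by simp
  also have "\<dots> \<le> card S + 1" using fin S0S card_mono by auto
  finally show ?thesis .
qed

theorem theorem4p1:
  fixes E :: "'a set" and indep :: "'a set \<Rightarrow> bool"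
    and phi :: "'a \<Rightarrow> 'f::field ^ 'n" and q :: nat and e f :: 'a
  assumes "\<exists>p k. prime p \<and> k > 0 \<and> q = p ^ k"
    and "finite (UNIV :: 'f set)" and "CARD('f) = q"
    and "matroid E indep"
    and "represents E indep phi"
    and "simple_matroid E indep"
    and "\<forall>x \<in> E. \<not> coloop E indep x"
    and "loose E indep e" and "loose E indep f" and "e \<noteq> f"
  shows "mrank E indep \<le> 2 * q \<or> cocircuit E indep {e, f}"
proof (cases "mrank E indep \<le> 2 * q")
  case True then show ?thesis by simp
next
  case False
  note M = assms(4) and R = assms(5) and Le = assms(8) and Lf = assms(9) and ef = assms(10)
  note finF = assms(2) and cardF = assms(3)
  define r where "r = mrank E indep"
  from False have rq: "2 * q < r" unfolding r_def by simp
  have eE: "e \<in> E" and fE: "f \<in> E" using Le Lf unfolding loose_def by auto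
  have finE: "finite E" using M by (rule m_fin)
  have nob: "False" if B: "basis E indep B" and eB: "e \<notin> B" and fB: "f \<notin> B" for B
  proof -
    have cB: "card B = r" using basis_card[OF M B] r_def by simp
    have BE: "B \<subseteq> E" and iB: "indep B" using B unfolding basis_def by auto
    have finB: "finite B" using BE finE finite_subset by blast
    have injB: "inj_on phi B" and indV: "vec.independent (phi ` B)"
      using R BE iB unfolding represents_def by auto
    define V where "V = phi ` B"
    have finV: "finite V" unfolding V_def using finB by simp
    have cV: "card V = r" unfolding V_def using card_image[OF injB] cB by simp
    have spanE: "phi x \<in> vec.span V" if x: "x \<in> E" "x \<notin> B" for x
    proof (rule ccontr)
      assume ns: "phi x \<notin> vec.span V"
      hence "phi x \<notin> V" using vec.span_base by blast
      hence "inj_on phi (insert x B)" using injB unfolding V_def by auto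
      moreover have "vec.independent (phi ` insert x B)"
        using ns indV \<open>phi x \<notin> V\<close> unfolding V_def by (simp add: vec.independent_insert)
      moreover have "insert x B \<subseteq> E" using x BE by blast
      ultimately have "indep (insert x B)" using R unfolding represents_def by blast
      moreover have "B \<subset> insert x B" using x by blast
      ultimately show False using B \<open>insert x B \<subseteq> E\<close> unfolding basis_def by blast
    qed
    have supp: "r \<le> card {v\<in>V. a v \<noteq> 0} + 1"
      if x: "x \<in> {e, f}" and xa: "phi x = (\<Sum>v\<in>V. a v *s v)" for x a
    proof -
      have Lx: "loose E indep x" using x Le Lf by blast
      define Sa where "Sa = {b\<in>B. a (phi b) \<noteq> 0}"
      have imSa: "phi ` Sa = {v\<in>V. a v \<noteq> 0}" unfolding Sa_def V_def by auto
      have cSa: "card Sa = card {v\<in>V. a v \<noteq> 0}"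
        using imSa card_image[of phi Sa] injB unfolding Sa_def
        by (metis (no_types, lifting) inj_on_subset mem_Collect_eq subsetI)
      have "phi x = (\<Sum>v\<in>{v\<in>V. a v \<noteq> 0}. a v *s v)"
        unfolding xa by (rule sum.mono_neutral_right) (use finV in auto)
      also have "\<dots> \<in> vec.span (phi ` Sa)" unfolding imSa
        by (intro vec.span_sum vec.span_scale vec.span_base) auto
      finally have "phi x \<in> vec.span (phi ` Sa)" .
      moreover have "x \<notin> Sa" using x eB fB unfolding Sa_def by auto
      moreover have "Sa \<subseteq> E" using BE unfolding Sa_def by auto
      ultimately have "r \<le> card Sa + 1" using span_card[OF M R Lx] r_def by blast
      thus ?thesis using cSa by simp
    qed
    obtain a where a: "phi e = (\<Sum>v\<in>V. a v *s v)"
      using spanE[OF eE eB] vec.span_finite[OF finV] by auto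
    obtain c where c: "phi f = (\<Sum>v\<in>V. c v *s v)"
      using spanE[OF fE fB] vec.span_finite[OF finV] by auto
    define A where "A = {v\<in>V. a v \<noteq> 0}"
    define C where "C = {v\<in>V. c v \<noteq> 0}"
    have cA: "r \<le> card A + 1" using supp[OF _ a] unfolding A_def by simp
    have cC: "r \<le> card C + 1" using supp[OF _ c] unfolding C_def by simp
    define P where "P = A \<inter> C"
    have finA: "finite A" "finite C" unfolding A_def C_def using finV by auto
    have "card (A \<union> C) \<le> r" using cV finV card_mono[of V "A \<union> C"]
      unfolding A_def C_def by auto
    hence cP: "r \<le> card P + 2" using card_Un_Int[OF finA] cA cC unfolding P_def by linarith
    have "\<exists>l. 3 \<le> card {v\<in>P. a v / c v = l}"
    proof (rule ccontr)
      assume nt: "\<not> ?thesis"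
      define F where "F = (\<lambda>l. {v\<in>P. a v / c v = l})"
      have lt3: "card (F l) < 3" for l using nt unfolding F_def by (meson not_le)
      have le2: "card (F l) \<le> 2" for l using lt3[of l] by linarith
      have Peq: "P = (\<Union>l\<in>UNIV - {0}. F l)"
        unfolding F_def P_def A_def C_def by auto
      have "card (\<Union>l\<in>UNIV - {0}. F l) \<le> (\<Sum>l\<in>UNIV - {0}. card (F l))"
        using finF by (intro card_UN_le) simp
      hence "card P \<le> (\<Sum>l\<in>UNIV - {0}. card (F l))" unfolding Peq[symmetric] .
      also have "\<dots> \<le> (\<Sum>l\<in>UNIV - {0::'f}. 2)" by (intro sum_mono le2)
      also have "\<dots> = 2 * (q - 1)" using cardF finF by (simp add: card_Diff_singleton)
      finally have "card P \<le> 2 * (q - 1)" .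
      moreover have "1 \<le> q" using cardF finF card_gt_0_iff[of "UNIV :: 'f set"] by simp
      ultimately show False using cP rq by linarith
    qed
    then obtain l where T3: "3 \<le> card {v\<in>P. a v / c v = l}" by blast
    define T where "T = {v\<in>P. a v / c v = l}"
    have Tz: "a v - l * c v = 0" if "v \<in> T" for v
      using that unfolding T_def P_def C_def by (auto simp: field_simps)
    have "phi e - l *s phi f = (\<Sum>v\<in>V. a v *s v) - (\<Sum>v\<in>V. (l * c v) *s v)"
      unfolding a c by (simp add: vec.scale_sum_right vec.scale_scale)
    also have "\<dots> = (\<Sum>v\<in>V. a v *s v - (l * c v) *s v)"
      by (simp only: sum_subtractf)
    also have "\<dots> = (\<Sum>v\<in>V. (a v - l * c v) *s v)"
      by (simp only: vec.scale_left_diff_distrib)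
    also have "\<dots> = (\<Sum>v\<in>V - T. (a v - l * c v) *s v)"
      by (rule sum.mono_neutral_right) (use finV Tz in auto)
    also have "\<dots> \<in> vec.span (V - T)"
      by (intro vec.span_sum vec.span_scale vec.span_base) auto
    finally have d: "phi e - l *s phi f \<in> vec.span (insert (phi f) (V - T))"
      using vec.span_mono[of "V - T" "insert (phi f) (V - T)"] by blast
    have "l *s phi f \<in> vec.span (insert (phi f) (V - T))"
      by (intro vec.span_scale vec.span_base) auto
    from vec.span_add[OF d this]
    have esp: "phi e \<in> vec.span (insert (phi f) (V - T))" by simp
    define TB where "TB = {b\<in>B. phi b \<in> T}"
    define S' where "S' = insert f (B - TB)"
    have imS: "phi ` S' = insert (phi f) (V - T)" unfolding S'_def TB_def V_def by auto
    have TsV: "T \<subseteq> V" unfolding T_def P_def A_def by auto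
    have imTB: "phi ` TB = T" using TsV unfolding TB_def V_def by auto
    have cTB: "card TB = card T" using imTB card_image[of phi TB] injB
      unfolding TB_def by (metis (no_types, lifting) inj_on_subset mem_Collect_eq subsetI)
    have TBB: "TB \<subseteq> B" unfolding TB_def by auto
    have "card S' \<le> card (B - TB) + 1" unfolding S'_def
      using finB card_insert_le_m1 by (simp add: card_insert_if)
    also have "card (B - TB) = r - card TB" using card_Diff_subset[OF _ TBB] finB TBB cB
      finite_subset by metis
    finally have cS: "card S' \<le> r - card TB + 1" .
    have "card TB \<le> r" using card_mono[OF finB TBB] cB by simp
    have "r \<le> card S' + 1"
      using span_card[OF M R Le, of S'] esp imS ef eB fE BE r_def unfolding S'_def by auto
    thus False using cS T3 cTB \<open>card TB \<le> r\<close> unfolding T_def by linarith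
  qed
  have "cocircuit E indep {e, f}"
    unfolding cocircuit_def
  proof (intro conjI allI impI)
    show "{e, f} \<subseteq> E" using eE fE by blast
  next
    fix B assume "basis E indep B"
    thus "{e, f} \<inter> B \<noteq> {}" using nob by blast
  next
    fix D assume D: "D \<subset> {e, f}"
    obtain Be where Be: "basis E indep Be" "e \<notin> Be"
      using assms(7) eE unfolding coloop_def by blast
    obtain Bf where Bf: "basis E indep Bf" "f \<notin> Bf"
      using assms(7) fE unfolding coloop_def by blast
    have "D \<subseteq> {e} \<or> D \<subseteq> {f}" using D by blast
    thus "\<exists>B. basis E indep B \<and> D \<inter> B = {}" using Be Bf by blast
  qed
  thus ?thesis by simp
qed

end
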